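(* There is an absolute constant $C$ such that the following holds. Let $\delta\in(0,1/2)$ and let $\boldsymbol\theta_1,\boldsymbol\theta_2\in\mathbb R^d$ satisfy $\|\boldsymbol\theta_1-\boldsymbol\theta_2\|_2^2\ge C\sigma^2\log\delta^{-1}$. Let $\hat{\boldsymbol\theta}_1,\hat{\boldsymbol\theta}_2\in\mathbb R^d$ satisfy $\|\hat{\boldsymbol\theta}_b-\boldsymbol\theta_b\|_2\le\sigma$ for $b\in\{1,2\}$, and let $\hat{\mathbf c}=(\hat{\boldsymbol\theta}_1+\hat{\boldsymbol\theta}_2)/2$. Then if $\mathbf x\sim\mathcal N(\boldsymbol\theta_1,\sigma^2\mathbf I_d)$, with probability at least $1-\delta$ we have $(\mathbf x-\hat{\mathbf c})\cdot(\hat{\boldsymbol\theta}_1-\hat{\mathbf c})>0$; and if $\mathbf x\sim\mathcal N(\boldsymbol\theta_2,\sigma^2\mathbf I_d)$, with probability at least $1-\delta$ we have $(\mathbf x-\hat{\mathbf c})\cdot(\hat{\boldsymbol\theta}_1-\hat{\mathbf c})<0$. *)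

theory Defs
  imports "HOL-Probability.Probability"
begin

text \<open>Vectors in R^d are represented as functions nat => real, of which only the
coordinates i < d matter.\<close>

definition vinner :: "nat \<Rightarrow> (nat \<Rightarrow> real) \<Rightarrow> (nat \<Rightarrow> real) \<Rightarrow> real" where
  "vinner d x y = (\<Sum>i<d. x i * y i)"

definition vnorm :: "nat \<Rightarrow> (nat \<Rightarrow> real) \<Rightarrow> real" where
  "vnorm d x = sqrt (vinner d x x)"

definition gauss_vec :: "nat \<Rightarrow> (nat \<Rightarrow> real) \<Rightarrow> real \<Rightarrow> (nat \<Rightarrow> real) measure" where
  "gauss_vec d mu \<sigma> = PiM {..<d} (\<lambda>i. density lborel (normal_density (mu i) \<sigma>))"

end

theory Submission
  imports Defs
begin

lemma mgf1:
  assumes "(\<sigma>::real) > 0"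
  shows "(\<integral>\<^sup>+x. ennreal (exp (s*(x-\<mu>))) \<partial>density lborel (normal_density \<mu> \<sigma>)) = ennreal (exp (s\<^sup>2*\<sigma>\<^sup>2/2))"
proof -
  have pt: "normal_density \<mu> \<sigma> x * exp (s*(x-\<mu>)) = exp (s\<^sup>2*\<sigma>\<^sup>2/2) * normal_density (\<mu> + s*\<sigma>\<^sup>2) \<sigma> x" for x
  proof -
    have eq: "-(x - \<mu>)\<^sup>2 / (2 * \<sigma>\<^sup>2) + s*(x-\<mu>) = s\<^sup>2*\<sigma>\<^sup>2/2 + -(x - (\<mu> + s*\<sigma>\<^sup>2))\<^sup>2 / (2 * \<sigma>\<^sup>2)"
      using assms by (simp add: field_simps power2_eq_square)
    have "exp (-(x - \<mu>)\<^sup>2 / (2 * \<sigma>\<^sup>2)) * exp (s*(x-\<mu>)) = exp (-(x - \<mu>)\<^sup>2 / (2 * \<sigma>\<^sup>2) + s*(x-\<mu>))"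
      by (rule mult_exp_exp)
    also have "\<dots> = exp (s\<^sup>2*\<sigma>\<^sup>2/2 + -(x - (\<mu> + s*\<sigma>\<^sup>2))\<^sup>2 / (2 * \<sigma>\<^sup>2))"
      by (simp only: eq)
    also have "\<dots> = exp (s\<^sup>2*\<sigma>\<^sup>2/2) * exp (-(x - (\<mu> + s*\<sigma>\<^sup>2))\<^sup>2 / (2 * \<sigma>\<^sup>2))"
      by (rule exp_add)
    finally have e2: "exp (-(x - \<mu>)\<^sup>2 / (2 * \<sigma>\<^sup>2)) * exp (s*(x-\<mu>)) = exp (s\<^sup>2*\<sigma>\<^sup>2/2) * exp (-(x - (\<mu> + s*\<sigma>\<^sup>2))\<^sup>2 / (2 * \<sigma>\<^sup>2))" .
    show ?thesis unfolding normal_density_def mult.assoc e2 by (simp only: mult_ac)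
  qed
  have one: "(\<integral>\<^sup>+x. ennreal (normal_density m \<sigma> x) \<partial>lborel) = 1" for m
  proof -
    interpret prob_space "density lborel (normal_density m \<sigma>)" by (rule prob_space_normal_density[OF assms])
    have "emeasure (density lborel (normal_density m \<sigma>)) UNIV = 1"
      using emeasure_space_1 by simp
    then show ?thesis by (simp add: emeasure_density)
  qed
  have "(\<integral>\<^sup>+x. ennreal (exp (s*(x-\<mu>))) \<partial>density lborel (normal_density \<mu> \<sigma>))
      = (\<integral>\<^sup>+x. ennreal (normal_density \<mu> \<sigma> x) * ennreal (exp (s*(x-\<mu>))) \<partial>lborel)"
    by (subst nn_integral_density) auto
  also have "\<dots> = (\<integral>\<^sup>+x. ennreal (exp (s\<^sup>2*\<sigma>\<^sup>2/2)) * ennreal (normal_density (\<mu> + s*\<sigma>\<^sup>2) \<sigma> x) \<partial>lborel)"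
    by (intro nn_integral_cong) (simp add: pt normal_density_nonneg flip: ennreal_mult)
  also have "\<dots> = ennreal (exp (s\<^sup>2*\<sigma>\<^sup>2/2))"
    by (subst nn_integral_cmult) (auto simp: one)
  finally show ?thesis .
qed


lemma psf: "(\<sigma>::real) > 0 \<Longrightarrow> product_sigma_finite (\<lambda>i. density lborel (normal_density (\<mu> i) \<sigma>))"
  unfolding product_sigma_finite_def
  using prob_space_normal_density prob_space_imp_sigma_finite by blast

lemma mgfd:
  assumes "(\<sigma>::real) > 0"
  shows "(\<integral>\<^sup>+x. ennreal (exp (s * (\<Sum>i<d. w i * (x i - \<mu> i)))) \<partial>gauss_vec d \<mu> \<sigma>)
     = ennreal (exp (s\<^sup>2*\<sigma>\<^sup>2*(\<Sum>i<d. (w i)\<^sup>2)/2))"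
proof -
  interpret product_sigma_finite "\<lambda>i. density lborel (normal_density (\<mu> i) \<sigma>)"
    using psf[OF assms] .
  have "(\<integral>\<^sup>+x. ennreal (exp (s * (\<Sum>i<d. w i * (x i - \<mu> i)))) \<partial>gauss_vec d \<mu> \<sigma>)
    = (\<integral>\<^sup>+x. (\<Prod>i\<in>{..<d}. (\<lambda>i y. ennreal (exp ((s * w i) * (y - \<mu> i)))) i (x i)) \<partial>gauss_vec d \<mu> \<sigma>)"
    by (intro nn_integral_cong) (simp add: sum_distrib_left exp_sum prod_ennreal mult.assoc)
  also have "\<dots> = (\<Prod>i\<in>{..<d}. ennreal (exp ((s * w i)\<^sup>2*\<sigma>\<^sup>2/2)))"
    unfolding gauss_vec_def
    by (subst product_nn_integral_prod) (auto simp: mgf1[OF assms])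
  also have "\<dots> = ennreal (exp (s\<^sup>2*\<sigma>\<^sup>2*(\<Sum>i<d. (w i)\<^sup>2)/2))"
  proof -
    have "(\<Sum>i<d. (s * w i)\<^sup>2*\<sigma>\<^sup>2/2) = (\<Sum>i<d. (s\<^sup>2*\<sigma>\<^sup>2/2) * (w i)\<^sup>2)"
      by (intro sum.cong) (simp_all add: power_mult_distrib)
    also have "\<dots> = s\<^sup>2*\<sigma>\<^sup>2*(\<Sum>i<d. (w i)\<^sup>2)/2"
      by (subst sum_distrib_left[symmetric]) simp
    finally have "(\<Sum>i<d. (s * w i)\<^sup>2*\<sigma>\<^sup>2/2) = s\<^sup>2*\<sigma>\<^sup>2*(\<Sum>i<d. (w i)\<^sup>2)/2" .
    then have "exp (\<Sum>i<d. (s * w i)\<^sup>2*\<sigma>\<^sup>2/2) = exp (s\<^sup>2*\<sigma>\<^sup>2*(\<Sum>i<d. (w i)\<^sup>2)/2)"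
      by (rule arg_cong)
    then have "(\<Prod>i<d. exp ((s * w i)\<^sup>2*\<sigma>\<^sup>2/2)) = exp (s\<^sup>2*\<sigma>\<^sup>2*(\<Sum>i<d. (w i)\<^sup>2)/2)"
      by (simp add: exp_sum)
    then show ?thesis by (simp add: prod_ennreal)
  qed
  finally show ?thesis .
qed

lemma gv_prob: "(\<sigma>::real) > 0 \<Longrightarrow> prob_space (gauss_vec d \<mu> \<sigma>)"
  unfolding gauss_vec_def by (intro prob_space_PiM prob_space_normal_density)

lemma gsum_meas[measurable]: "(\<lambda>x. \<Sum>i<d. w i * (x i - \<mu> i)) \<in> borel_measurable (gauss_vec d m \<sigma>)"
  unfolding gauss_vec_def by measurable

lemma tail:
  assumes "(\<sigma>::real) > 0"
  shows "measure (gauss_vec d \<mu> \<sigma>) {x \<in> space (gauss_vec d \<mu> \<sigma>). a \<le> s * (\<Sum>i<d. w i * (x i - \<mu> i))}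
     \<le> exp (s\<^sup>2*\<sigma>\<^sup>2*(\<Sum>i<d. (w i)\<^sup>2)/2 - a)"
proof -
  let ?M = "gauss_vec d \<mu> \<sigma>"
  let ?g = "\<lambda>x. \<Sum>i<d. w i * (x i - \<mu> i)"
  let ?S = "{x \<in> space ?M. a \<le> s * ?g x}"
  interpret prob_space ?M using gv_prob[OF assms] .
  have S: "?S \<in> sets ?M" by measurable
  have "emeasure ?M ?S = (\<integral>\<^sup>+x. indicator ?S x \<partial>?M)" using S by simp
  also have "\<dots> \<le> (\<integral>\<^sup>+x. ennreal (exp (-a)) * ennreal (exp (s * ?g x)) \<partial>?M)"
  proof (intro nn_integral_mono)
    fix x
    show "indicator ?S x \<le> ennreal (exp (-a)) * ennreal (exp (s * ?g x))"
    proof (cases "x \<in> ?S")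
      case True
      then have "1 \<le> exp (-a) * exp (s * ?g x)" by (simp add: exp_add[symmetric])
      then show ?thesis using True by (simp flip: ennreal_mult)
    qed simp
  qed
  also have "\<dots> = ennreal (exp (-a)) * ennreal (exp (s\<^sup>2*\<sigma>\<^sup>2*(\<Sum>i<d. (w i)\<^sup>2)/2))"
    by (subst nn_integral_cmult) (auto simp: mgfd[OF assms])
  also have "\<dots> = ennreal (exp (s\<^sup>2*\<sigma>\<^sup>2*(\<Sum>i<d. (w i)\<^sup>2)/2 - a))"
  proof -
    have "exp (-a) * exp (s\<^sup>2*\<sigma>\<^sup>2*(\<Sum>i<d. (w i)\<^sup>2)/2) = exp (s\<^sup>2*\<sigma>\<^sup>2*(\<Sum>i<d. (w i)\<^sup>2)/2 - a)"
      by (simp add: mult_exp_exp)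
    then show ?thesis by (simp flip: ennreal_mult)
  qed
  finally show ?thesis by (simp add: emeasure_eq_measure)
qed

lemma arith_main:
  fixes \<sigma> L D W K :: real
  assumes s: "\<sigma> > 0" and L: "L \<ge> 2/3" and D: "D \<ge> 0" and DL: "D\<^sup>2 \<ge> 200 * \<sigma>\<^sup>2 * L"
    and W: "W \<ge> D - 2*\<sigma>" and K: "K \<ge> W\<^sup>2/2 - \<sigma>*W"
  shows "K > 0 \<and> L \<le> K\<^sup>2 / (2*\<sigma>\<^sup>2*W\<^sup>2)"
proof -
  have "\<sigma>\<^sup>2 * (2/3) \<le> \<sigma>\<^sup>2 * L" using L by (intro mult_left_mono) auto
  moreover have "200 * \<sigma>\<^sup>2 * L = 200 * (\<sigma>\<^sup>2 * L)" by simp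
  ultimately have "D\<^sup>2 \<ge> 133 * \<sigma>\<^sup>2" using DL zero_le_power2[of \<sigma>] by linarith
  then have D11: "D \<ge> 11*\<sigma>"
  proof -
    have "(11*\<sigma>)\<^sup>2 = 121 * \<sigma>\<^sup>2" by (simp add: power_mult_distrib)
    then have "(11*\<sigma>)\<^sup>2 \<le> D\<^sup>2" using \<open>D\<^sup>2 \<ge> 133 * \<sigma>\<^sup>2\<close> zero_le_power2[of \<sigma>] by linarith
    then show ?thesis using D by (rule power2_le_imp_le)
  qed
  define u where "u = W/2 - \<sigma>"
  have u1: "u \<ge> D/2 - 2*\<sigma>" using W u_def by simp
  have u0: "u > 0" using u1 D11 s by simp
  have "(D/2 - 2*\<sigma>)\<^sup>2 - D\<^sup>2/100 = D * (0.24 * D - 2*\<sigma>) + 4*\<sigma>\<^sup>2"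
    by (simp add: power2_eq_square algebra_simps)
  also have "\<dots> \<ge> 0" using D11 s D by (intro add_nonneg_nonneg mult_nonneg_nonneg) auto
  finally have "(D/2 - 2*\<sigma>)\<^sup>2 \<ge> D\<^sup>2/100" by simp
  moreover have "u\<^sup>2 \<ge> (D/2 - 2*\<sigma>)\<^sup>2" using u1 D11 s by (intro power_mono) auto
  ultimately have uL: "u\<^sup>2 \<ge> 2*\<sigma>\<^sup>2*L" using DL by simp
  have Wpos: "W > 0" using u0 u_def s by simp
  have "W*u = W\<^sup>2/2 - \<sigma>*W" unfolding u_def by (simp add: power2_eq_square algebra_simps)
  then have KWu: "K \<ge> W*u" using K by linarith
  have "W*u > 0" using Wpos u0 by simp
  then have Kpos: "K > 0" using KWu by simp
  have "K\<^sup>2 \<ge> (W*u)\<^sup>2" using KWu \<open>W*u>0\<close> by (intro power_mono) auto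
  also have "(W*u)\<^sup>2 \<ge> W\<^sup>2 * (2*\<sigma>\<^sup>2*L)" using uL by (simp add: power_mult_distrib mult_left_mono)
  finally have "K\<^sup>2 \<ge> L * (2*\<sigma>\<^sup>2*W\<^sup>2)" by (simp add: algebra_simps)
  then have "L \<le> K\<^sup>2 / (2*\<sigma>\<^sup>2*W\<^sup>2)" using s Wpos by (simp add: pos_le_divide_eq)
  then show ?thesis using Kpos by simp
qed

lemma vnorm_L2: "vnorm d x = L2_set x {..<d}"
  by (simp add: vnorm_def vinner_def L2_set_def power2_eq_square)

lemma cs: "\<bar>\<Sum>i<d. a i * b i\<bar> \<le> vnorm d a * vnorm d b"
proof -
  have "\<bar>\<Sum>i<d. a i * b i\<bar> \<le> (\<Sum>i<d. \<bar>a i\<bar> * \<bar>b i\<bar>)"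
    by (metis (no_types, lifting) abs_mult sum.cong sum_abs)
  also have "\<dots> \<le> vnorm d a * vnorm d b" unfolding vnorm_L2 by (rule L2_set_mult_ineq)
  finally show ?thesis .
qed

lemma tri: "vnorm d (\<lambda>i. t1 i - t2 i) \<le> vnorm d (\<lambda>i. h1 i - h2 i) + vnorm d (\<lambda>i. h1 i - t1 i) + vnorm d (\<lambda>i. h2 i - t2 i)"
proof -
  have e: "(\<lambda>i. t1 i - t2 i) = (\<lambda>i. ((h1 i - h2 i) + (-(h1 i - t1 i))) + (h2 i - t2 i))" by auto
  have n: "L2_set (\<lambda>i. -(h1 i - t1 i)) {..<d} = L2_set (\<lambda>i. h1 i - t1 i) {..<d}"
    by (simp add: L2_set_def power2_commute)
    have a: "L2_set (\<lambda>i. ((h1 i - h2 i) + (-(h1 i - t1 i))) + (h2 i - t2 i)) {..<d}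
       \<le> L2_set (\<lambda>i. (h1 i - h2 i) + (-(h1 i - t1 i))) {..<d} + L2_set (\<lambda>i. h2 i - t2 i) {..<d}"
      by (rule L2_set_triangle_ineq)
    have b: "L2_set (\<lambda>i. (h1 i - h2 i) + (-(h1 i - t1 i))) {..<d}
       \<le> L2_set (\<lambda>i. h1 i - h2 i) {..<d} + L2_set (\<lambda>i. -(h1 i - t1 i)) {..<d}"
      by (rule L2_set_triangle_ineq)
  have "vnorm d (\<lambda>i. t1 i - t2 i) = L2_set (\<lambda>i. ((h1 i - h2 i) + (-(h1 i - t1 i))) + (h2 i - t2 i)) {..<d}"
    unfolding vnorm_L2 e ..
  then show ?thesis using order_trans[OF a add_right_mono[OF b]] unfolding n vnorm_L2 by linarith
qed

lemma side:
  fixes \<sigma> \<delta> D K t :: real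
  assumes s: "\<sigma> > 0" and dp: "\<delta> > 0" and L: "ln (1/\<delta>) \<ge> 2/3" and D: "D \<ge> 0"
    and DL: "D\<^sup>2 \<ge> 200 * \<sigma>\<^sup>2 * ln (1/\<delta>)"
    and W: "sqrt (\<Sum>i<d. (w i)\<^sup>2) \<ge> D - 2*\<sigma>"
    and K: "K \<ge> (\<Sum>i<d. (w i)\<^sup>2)/2 - \<sigma> * sqrt (\<Sum>i<d. (w i)\<^sup>2)"
    and t: "t\<^sup>2 = 1"
  shows "measure (gauss_vec d \<mu> \<sigma>) {x \<in> space (gauss_vec d \<mu> \<sigma>). K \<le> t * (\<Sum>i<d. w i * (x i - \<mu> i))} \<le> \<delta>"
proof -
  define W2 where "W2 = (\<Sum>i<d. (w i)\<^sup>2)"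
  define W where "W = sqrt W2"
  have W2nn: "W2 \<ge> 0" unfolding W2_def by (simp add: sum_nonneg)
  have WW: "W\<^sup>2 = W2" using W2nn W_def by simp
  have K': "K \<ge> W\<^sup>2/2 - \<sigma>*W" using K WW unfolding W_def W2_def by simp
  have ar: "K > 0 \<and> ln (1/\<delta>) \<le> K\<^sup>2 / (2*\<sigma>\<^sup>2*W\<^sup>2)"
    using arith_main[OF s L D DL _ K'] W unfolding W_def W2_def by simp
  have "W \<noteq> 0"
  proof
    assume "W = 0" then show False using ar K' s L by simp
  qed
  have W2p: "W2 > 0"
  proof (rule ccontr)
    assume "\<not> W2 > 0"
    then have "W2 = 0" using W2nn by simp
    then show False using \<open>W \<noteq> 0\<close> W_def by simp
  qed
  define lam where "lam = K/(\<sigma>\<^sup>2*W2)"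
  have lp: "lam > 0" unfolding lam_def using ar s W2p by simp
  let ?g = "\<lambda>x. \<Sum>i<d. w i * (x i - \<mu> i)"
  have set_eq: "{x \<in> space (gauss_vec d \<mu> \<sigma>). K \<le> t * ?g x} = {x \<in> space (gauss_vec d \<mu> \<sigma>). lam*K \<le> (lam*t) * ?g x}"
    using lp by (auto simp: mult.assoc)
  have "measure (gauss_vec d \<mu> \<sigma>) {x \<in> space (gauss_vec d \<mu> \<sigma>). lam*K \<le> (lam*t) * ?g x}
     \<le> exp ((lam*t)\<^sup>2*\<sigma>\<^sup>2*W2/2 - lam*K)"
    using tail[OF s, of d \<mu> "lam*K" "lam*t" w] unfolding W2_def .
  also have "(lam*t)\<^sup>2*\<sigma>\<^sup>2*W2/2 - lam*K = - (K\<^sup>2 / (2*\<sigma>\<^sup>2*W2))"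
    unfolding lam_def using s W2p t by (simp add: power_mult_distrib field_simps power2_eq_square)
  also have "exp (- (K\<^sup>2 / (2*\<sigma>\<^sup>2*W2))) \<le> exp (- ln (1/\<delta>))"
    using ar WW by simp
  also have "exp (- ln (1/\<delta>)) = \<delta>" using dp by (simp add: ln_div)
  finally show ?thesis using set_eq by simp
qed

lemma f_eq: "vinner d (\<lambda>i. x i - (h1 i + h2 i)/2) (\<lambda>i. h1 i - (h1 i + h2 i)/2)
   = ((\<Sum>i<d. (h1 i - h2 i) * (x i - \<theta> i)) + (\<Sum>i<d. (\<theta> i - (h1 i + h2 i)/2) * (h1 i - h2 i)))/2"
  unfolding vinner_def sum_divide_distrib sum.distrib[symmetric]
  by (intro sum.cong) (auto simp: field_simps)

theorem mainTheorem16: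
  shows "\<exists>C::real. \<forall>(d::nat) (\<sigma>::real) (\<delta>::real) (\<theta>1::nat\<Rightarrow>real) \<theta>2 h1 h2.
    0 < \<sigma> \<longrightarrow> 0 < \<delta> \<longrightarrow> \<delta> < 1/2 \<longrightarrow>
    (vnorm d (\<lambda>i. \<theta>1 i - \<theta>2 i))\<^sup>2 \<ge> C * \<sigma>\<^sup>2 * ln (1 / \<delta>) \<longrightarrow>
    vnorm d (\<lambda>i. h1 i - \<theta>1 i) \<le> \<sigma> \<longrightarrow>
    vnorm d (\<lambda>i. h2 i - \<theta>2 i) \<le> \<sigma> \<longrightarrow>
    (let c = (\<lambda>i. (h1 i + h2 i) / 2) in
      measure (gauss_vec d \<theta>1 \<sigma>)
        {x \<in> space (gauss_vec d \<theta>1 \<sigma>). vinner d (\<lambda>i. x i - c i) (\<lambda>i. h1 i - c i) > 0}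
        \<ge> 1 - \<delta> \<and>
      measure (gauss_vec d \<theta>2 \<sigma>)
        {x \<in> space (gauss_vec d \<theta>2 \<sigma>). vinner d (\<lambda>i. x i - c i) (\<lambda>i. h1 i - c i) < 0}
        \<ge> 1 - \<delta>)"
proof (intro exI[of _ 200] allI impI)
  fix d :: nat and \<sigma> \<delta> :: real and \<theta>1 \<theta>2 h1 h2 :: "nat \<Rightarrow> real"
  assume s: "0 < \<sigma>" and dp: "0 < \<delta>" and dh: "\<delta> < 1/2"
    and DL: "(vnorm d (\<lambda>i. \<theta>1 i - \<theta>2 i))\<^sup>2 \<ge> 200 * \<sigma>\<^sup>2 * ln (1 / \<delta>)"
    and e1: "vnorm d (\<lambda>i. h1 i - \<theta>1 i) \<le> \<sigma>" and e2: "vnorm d (\<lambda>i. h2 i - \<theta>2 i) \<le> \<sigma>"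
  define w where "w = (\<lambda>i. h1 i - h2 i)"
  define D where "D = vnorm d (\<lambda>i. \<theta>1 i - \<theta>2 i)"
  have W: "vnorm d w = sqrt (\<Sum>i<d. (w i)\<^sup>2)" by (simp add: vnorm_def vinner_def power2_eq_square)
  have D0: "D \<ge> 0" unfolding D_def vnorm_def vinner_def by (simp add: sum_nonneg)
  have "2 \<le> 1/\<delta>" using dp dh by (simp add: field_simps)
  then have "ln 2 \<le> ln (1/\<delta>)" by (rule ln_mono) simp
  then have L: "ln (1/\<delta>) \<ge> 2/3" using ln2_ge_two_thirds by simp
  have Wge: "sqrt (\<Sum>i<d. (w i)\<^sup>2) \<ge> D - 2*\<sigma>"
    using tri[of d \<theta>1 \<theta>2 h1 h2] e1 e2 W unfolding D_def w_def by simp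
  let ?c = "\<lambda>i. (h1 i + h2 i) / 2"
  let ?f = "\<lambda>x. vinner d (\<lambda>i. x i - ?c i) (\<lambda>i. h1 i - ?c i)"
  define K1 where "K1 = (\<Sum>i<d. (\<theta>1 i - ?c i) * w i)"
  define K2 where "K2 = - (\<Sum>i<d. (\<theta>2 i - ?c i) * w i)"
  have K1e: "K1 = (\<Sum>i<d. (w i)\<^sup>2)/2 - (\<Sum>i<d. (h1 i - \<theta>1 i) * w i)"
    unfolding K1_def sum_divide_distrib sum_subtractf[symmetric]
    by (intro sum.cong) (auto simp: w_def field_simps power2_eq_square)
  have K2e: "K2 = (\<Sum>i<d. (w i)\<^sup>2)/2 + (\<Sum>i<d. (h2 i - \<theta>2 i) * w i)"
    unfolding K2_def sum_divide_distrib sum.distrib[symmetric] sum_negf[symmetric]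
    by (intro sum.cong) (auto simp: w_def field_simps power2_eq_square)
  have c1: "\<bar>\<Sum>i<d. (h1 i - \<theta>1 i) * w i\<bar> \<le> \<sigma> * sqrt (\<Sum>i<d. (w i)\<^sup>2)"
  proof (rule order_trans[OF cs[of "\<lambda>i. h1 i - \<theta>1 i" w d]])
    have "vnorm d w \<ge> 0" unfolding W by (simp add: sum_nonneg)
    then show "vnorm d (\<lambda>i. h1 i - \<theta>1 i) * vnorm d w \<le> \<sigma> * sqrt (\<Sum>i<d. (w i)\<^sup>2)"
      using e1 unfolding W[symmetric] by (rule mult_right_mono[rotated])
  qed
  have c2: "\<bar>\<Sum>i<d. (h2 i - \<theta>2 i) * w i\<bar> \<le> \<sigma> * sqrt (\<Sum>i<d. (w i)\<^sup>2)"
  proof (rule order_trans[OF cs[of "\<lambda>i. h2 i - \<theta>2 i" w d]])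
    have "vnorm d w \<ge> 0" unfolding W by (simp add: sum_nonneg)
    then show "vnorm d (\<lambda>i. h2 i - \<theta>2 i) * vnorm d w \<le> \<sigma> * sqrt (\<Sum>i<d. (w i)\<^sup>2)"
      using e2 unfolding W[symmetric] by (rule mult_right_mono[rotated])
  qed
  have K1b: "K1 \<ge> (\<Sum>i<d. (w i)\<^sup>2)/2 - \<sigma> * sqrt (\<Sum>i<d. (w i)\<^sup>2)" using K1e c1 by linarith
  have K2b: "K2 \<ge> (\<Sum>i<d. (w i)\<^sup>2)/2 - \<sigma> * sqrt (\<Sum>i<d. (w i)\<^sup>2)" using K2e c2 by linarith
  have DL': "D\<^sup>2 \<ge> 200 * \<sigma>\<^sup>2 * ln (1 / \<delta>)" using DL D_def by simp
  have b1: "measure (gauss_vec d \<theta>1 \<sigma>) {x \<in> space (gauss_vec d \<theta>1 \<sigma>). K1 \<le> (-1) * (\<Sum>i<d. w i * (x i - \<theta>1 i))} \<le> \<delta>"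
    by (rule side[OF s dp L D0 DL' Wge K1b]) simp
  have b2: "measure (gauss_vec d \<theta>2 \<sigma>) {x \<in> space (gauss_vec d \<theta>2 \<sigma>). K2 \<le> 1 * (\<Sum>i<d. w i * (x i - \<theta>2 i))} \<le> \<delta>"
    by (rule side[OF s dp L D0 DL' Wge K2b]) simp
  have f1: "?f x = ((\<Sum>i<d. w i * (x i - \<theta>1 i)) + K1)/2" for x
    unfolding f_eq[of d x h1 h2 \<theta>1] K1_def w_def by simp
  have f2: "?f x = ((\<Sum>i<d. w i * (x i - \<theta>2 i)) - K2)/2" for x
    unfolding f_eq[of d x h1 h2 \<theta>2] K2_def w_def by simp
  interpret P1: prob_space "gauss_vec d \<theta>1 \<sigma>" using gv_prob[OF s] .
  interpret P2: prob_space "gauss_vec d \<theta>2 \<sigma>" using gv_prob[OF s] .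
  have S1: "{x \<in> space (gauss_vec d \<theta>1 \<sigma>). ?f x > 0} = space (gauss_vec d \<theta>1 \<sigma>) -
      {x \<in> space (gauss_vec d \<theta>1 \<sigma>). K1 \<le> (-1) * (\<Sum>i<d. w i * (x i - \<theta>1 i))}"
  proof -
    have "?f x > 0 \<longleftrightarrow> \<not> (K1 \<le> (-1) * (\<Sum>i<d. w i * (x i - \<theta>1 i)))" for x
      unfolding f1 by (auto simp: field_simps)
    then show ?thesis by blast
  qed
  have S2: "{x \<in> space (gauss_vec d \<theta>2 \<sigma>). ?f x < 0} = space (gauss_vec d \<theta>2 \<sigma>) -
      {x \<in> space (gauss_vec d \<theta>2 \<sigma>). K2 \<le> 1 * (\<Sum>i<d. w i * (x i - \<theta>2 i))}"
  proof -
    have "?f x < 0 \<longleftrightarrow> \<not> (K2 \<le> 1 * (\<Sum>i<d. w i * (x i - \<theta>2 i)))" for x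
      unfolding f2 by (auto simp: field_simps)
    then show ?thesis by blast
  qed
  have m1: "{x \<in> space (gauss_vec d \<theta>1 \<sigma>). K1 \<le> (-1) * (\<Sum>i<d. w i * (x i - \<theta>1 i))} \<in> sets (gauss_vec d \<theta>1 \<sigma>)"
    by measurable
  have m2: "{x \<in> space (gauss_vec d \<theta>2 \<sigma>). K2 \<le> 1 * (\<Sum>i<d. w i * (x i - \<theta>2 i))} \<in> sets (gauss_vec d \<theta>2 \<sigma>)"
    by measurable
  show "let c = ?c in
      measure (gauss_vec d \<theta>1 \<sigma>)
        {x \<in> space (gauss_vec d \<theta>1 \<sigma>). vinner d (\<lambda>i. x i - c i) (\<lambda>i. h1 i - c i) > 0}
        \<ge> 1 - \<delta> \<and>
      measure (gauss_vec d \<theta>2 \<sigma>)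
        {x \<in> space (gauss_vec d \<theta>2 \<sigma>). vinner d (\<lambda>i. x i - c i) (\<lambda>i. h1 i - c i) < 0}
        \<ge> 1 - \<delta>"
    unfolding Let_def S1 S2 P1.prob_compl[OF m1] P2.prob_compl[OF m2] using b1 b2 by simp
qed

end
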